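(* Let $x \geq 1$ be an integer. For $m \geq 1$ let $N(m,x)$ denote the number of binary words of length $m$ that contain none of the patterns in $\mathcal{T}_x = \{0\mathbf{1}^y0,\ 1\mathbf{0}^y1 : 1 \leq y \leq x\}$ as a substring of consecutive bits, and set by convention $N(m,x) \triangleq 2$ for all integers $m \leq 1$. Then for every $m \geq 2$, $$N(m,x) = N(m-1,x) + N(m-x-1,x).$$
   Context: $\mathbf{0}^r$ (resp. $\mathbf{1}^r$) denotes a run of $r$ consecutive $0$'s (resp. $1$'s). A pattern is contained in a word if it appears as a contiguous block of consecutive bits. Note that for $m=1$ the convention value $2$ coincides with the actual count of binary words of length $1$. *)

theory Defs
  imports Main "HOL-Library.Sublist"
begin

text \<open>Binary words are lists of booleans (False = bit 0, True = bit 1).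
  The forbidden pattern set T_x = {0 1^y 0, 1 0^y 1 : 1 <= y <= x}.\<close>

definition forbidden_patterns :: "nat \<Rightarrow> bool list set" where
  "forbidden_patterns x =
     {[False] @ replicate y True @ [False] | y. 1 \<le> y \<and> y \<le> x} \<union>
     {[True] @ replicate y False @ [True] | y. 1 \<le> y \<and> y \<le> x}"

definition avoids :: "nat \<Rightarrow> bool list \<Rightarrow> bool" where
  "avoids x w \<longleftrightarrow> (\<forall>p \<in> forbidden_patterns x. \<not> sublist p w)"

definition N :: "int \<Rightarrow> nat \<Rightarrow> nat" where
  "N m x = (if m \<le> 1 then 2
            else card {w :: bool list. length w = nat m \<and> avoids x w})"

end

theory Submission
  imports Defs
begin

lemma F_alt: "forbidden_patterns x = {a # replicate y (\<not>a) @ [a] | a y. 1 \<le> y \<and> y \<le> x}"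
  unfolding forbidden_patterns_def
  apply (rule set_eqI)
  apply (rule iffI)
   apply (erule UnE; clarsimp)
    apply (rule exI[of _ False]; force)
   apply (rule exI[of _ True]; force)
  apply (clarsimp; case_tac a; force)
  done

lemma L0: "avoids x (a#w) \<longleftrightarrow> avoids x w \<and> (\<forall>p\<in>forbidden_patterns x. \<not> prefix p (a#w))"
  unfolding avoids_def sublist_Cons_right by auto

lemma L1: "avoids x (b#b#v) \<longleftrightarrow> avoids x (b#v)"
proof -
  have "\<forall>p\<in>forbidden_patterns x. \<not> prefix p (b#b#v)"
    unfolding F_alt proof clarify
    fix a y assume "1 \<le> y" "prefix (a # replicate y (\<not> a) @ [a]) (b # b # v)"
    then show False by (cases y) auto
  qed
  then show ?thesis using L0[of x b "b#v"] by blast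
qed

lemma L1rep0: "avoids x (replicate (Suc k) c @ v) \<longleftrightarrow> avoids x (c#v)"
  by (induction k) (auto simp: L1)

lemma L1rep: "avoids x (replicate k c @ c # v) \<longleftrightarrow> avoids x (c#v)"
  using L1rep0[of x k c v] by (simp add: replicate_app_Cons_same)

definition good :: "nat \<Rightarrow> bool list \<Rightarrow> bool" where
  "good x u = (\<forall>y. 1\<le>y \<and> y\<le>x \<longrightarrow> \<not> prefix (replicate y (hd u) @ [\<not>hd u]) u)"

lemma L2: assumes "u \<noteq> []"
  shows "avoids x ((\<not>hd u) # u) \<longleftrightarrow> avoids x u \<and> good x u"
proof -
  have "(\<forall>p\<in>forbidden_patterns x. \<not> prefix p ((\<not>hd u) # u)) \<longleftrightarrow> good x u"
    unfolding F_alt good_def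
  proof safe
    fix y assume h: "\<forall>p\<in>{a # replicate y (\<not> a) @ [a] |a y. 1 \<le> y \<and> y \<le> x}. \<not> prefix p ((\<not> hd u) # u)"
      and y: "1 \<le> y" "y \<le> x" and p: "prefix (replicate y (hd u) @ [\<not> hd u]) u"
    have "(\<not> hd u) # replicate y (\<not>\<not> hd u) @ [\<not> hd u] \<in> {a # replicate y (\<not> a) @ [a] |a y. 1 \<le> y \<and> y \<le> x}"
      using y by blast
    then have "\<not> prefix ((\<not> hd u) # replicate y (\<not>\<not> hd u) @ [\<not> hd u]) ((\<not> hd u) # u)" using h by blast
    then show False using p by simp
  next
    fix a y assume h: "\<forall>y. 1 \<le> y \<and> y \<le> x \<longrightarrow> \<not> prefix (replicate y (hd u) @ [\<not> hd u]) u"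
      and y: "1 \<le> y" "y \<le> x" and p: "prefix (a # replicate y (\<not> a) @ [a]) ((\<not> hd u) # u)"
    then have "a = (\<not> hd u)" by simp
    then show False using h y p by auto
  qed
  then show ?thesis using L0 by blast
qed

lemma good_iff: assumes "u \<noteq> []"
  shows "good x u \<longleftrightarrow> (\<forall>i<length u. i \<le> x \<longrightarrow> u!i = hd u)"
proof
  assume g: "good x u"
  show "\<forall>i<length u. i \<le> x \<longrightarrow> u!i = hd u"
  proof (rule ccontr)
    assume "\<not> ?thesis"
    then have ex: "\<exists>i. i<length u \<and> i \<le> x \<and> u!i \<noteq> hd u" by blast
    obtain i where i: "i<length u \<and> i \<le> x \<and> u!i \<noteq> hd u"
      and mn: "\<And>j. j < i \<Longrightarrow> \<not>(j<length u \<and> j \<le> x \<and> u!j \<noteq> hd u)"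
      using exists_least_iff[THEN iffD1, OF ex] by blast
    have i0: "i \<noteq> 0" using i assms by (metis hd_conv_nth)
    have "take (Suc i) u = replicate i (hd u) @ [\<not>hd u]"
      apply (rule nth_equalityI)
      using i mn i0 by (auto simp: nth_append less_Suc_eq)
    then have "prefix (replicate i (hd u) @ [\<not>hd u]) u"
      by (metis take_is_prefix)
    then show False using g i i0 unfolding good_def by auto
  qed
next
  assume h: "\<forall>i<length u. i \<le> x \<longrightarrow> u!i = hd u"
  show "good x u" unfolding good_def
  proof (intro allI impI notI)
    fix y assume y: "1 \<le> y \<and> y \<le> x" and p: "prefix (replicate y (hd u) @ [\<not>hd u]) u"
    then obtain r where r: "u = replicate y (hd u) @ [\<not>hd u] @ r" by (auto simp: prefix_def)
    have e1: "(replicate y c @ [\<not>c] @ r) ! y = (\<not>c)" for c :: bool by (simp add: nth_append)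
    from r have "u ! y = (replicate y (hd u) @ [\<not>hd u] @ r) ! y" by (rule arg_cong)
    then have "u!y = (\<not>hd u)" using e1 by simp
    moreover from r have "length u = length (replicate y (hd u) @ [\<not>hd u] @ r)" by (rule arg_cong)
    then have "y < length u" by simp
    ultimately show False using h y by auto
  qed
qed

lemma avoids_rep: "avoids x (replicate n c)"
  unfolding avoids_def F_alt
proof clarify
  fix a y assume "1 \<le> y" "sublist (a # replicate y (\<not> a) @ [a]) (replicate n c)"
  then have "set (a # replicate y (\<not> a) @ [a]) \<subseteq> {c}"
    using set_mono_sublist[of "a # replicate y (\<not> a) @ [a]" "replicate n c"] by auto
  then show False using \<open>1 \<le> y\<close> by (cases y) auto
qed


definition A :: "nat \<Rightarrow> nat \<Rightarrow> bool list set" where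
  "A x n = {w. length w = n \<and> avoids x w}"

lemma finA: "finite (A x n)"
proof -
  have "A x n \<subseteq> {xs. set xs \<subseteq> UNIV \<and> length xs = n}" unfolding A_def by auto
  then show ?thesis using finite_lists_length_eq[of "UNIV :: bool set" n] finite_subset by auto
qed

lemma decomp: assumes "n \<ge> 1"
  shows "A x (Suc n) = (\<lambda>w. hd w # w) ` A x n \<union> (\<lambda>u. (\<not>hd u) # u) ` {u \<in> A x n. good x u}"
proof (rule set_eqI, rule iffI)
  fix w assume w: "w \<in> A x (Suc n)"
  then obtain b u where bu: "w = b # u" and lu: "length u = n" and av: "avoids x (b # u)"
    unfolding A_def by (cases w) auto
  have un: "u \<noteq> []" using lu assms by auto
  have au: "avoids x u" using L0[of x b u] av by simp
  show "w \<in> (\<lambda>w. hd w # w) ` A x n \<union> (\<lambda>u. (\<not>hd u) # u) ` {u \<in> A x n. good x u}"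
  proof (cases "b = hd u")
    case True
    then show ?thesis using bu lu au unfolding A_def by auto
  next
    case False
    then have "b = (\<not> hd u)" by auto
    then have "good x u" using L2[OF un] av by auto
    then show ?thesis using bu lu au \<open>b = (\<not> hd u)\<close> unfolding A_def by auto
  qed
next
  fix w assume "w \<in> (\<lambda>w. hd w # w) ` A x n \<union> (\<lambda>u. (\<not>hd u) # u) ` {u \<in> A x n. good x u}"
  then show "w \<in> A x (Suc n)"
  proof
    assume "w \<in> (\<lambda>w. hd w # w) ` A x n"
    then obtain u where u: "u \<in> A x n" "w = hd u # u" by auto
    then obtain t where t: "u = hd u # t" using assms unfolding A_def by (cases u) auto
    have "avoids x u" using u unfolding A_def by simp
    then have "avoids x (hd u # t)" using t by simp
    then have "avoids x (hd u # hd u # t)" using L1[of x "hd u" t] by simp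
    then show ?thesis using u t unfolding A_def by auto
  next
    assume "w \<in> (\<lambda>u. (\<not>hd u) # u) ` {u \<in> A x n. good x u}"
    then obtain u where u: "u \<in> A x n" "good x u" "w = (\<not>hd u) # u" by auto
    have un: "u \<noteq> []" using u assms unfolding A_def by auto
    show ?thesis using u L2[OF un] unfolding A_def by auto
  qed
qed

lemma cardA_Suc: assumes "n \<ge> 1"
  shows "card (A x (Suc n)) = card (A x n) + card {u \<in> A x n. good x u}"
proof -
  have fin2: "finite {u \<in> A x n. good x u}" using finA by auto
  have d: "(\<lambda>w. hd w # w) ` A x n \<inter> (\<lambda>u. (\<not>hd u) # u) ` {u \<in> A x n. good x u} = {}" by auto
  have i1: "inj_on (\<lambda>w. hd w # w) (A x n)" by (rule inj_onI) auto
  have i2: "inj_on (\<lambda>u. (\<not>hd u) # u) {u \<in> A x n. good x u}" by (rule inj_onI) auto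
  have "card ((\<lambda>w. hd w # w) ` A x n \<union> (\<lambda>u. (\<not>hd u) # u) ` {u \<in> A x n. good x u})
     = card ((\<lambda>w. hd w # w) ` A x n) + card ((\<lambda>u. (\<not>hd u) # u) ` {u \<in> A x n. good x u})"
    by (rule card_Un_disjoint) (use finA fin2 d in auto)
  then show ?thesis
    unfolding decomp[OF assms] by (simp add: card_image i1 i2)
qed

lemma A1: "A x 1 = {[True],[False]}"
  unfolding A_def using avoids_rep[of x 1] by (auto simp: length_Suc_conv)

lemma cardA1: "card (A x 1) = 2" using A1[of x] by simp

lemma cardG_small: assumes "1 \<le> n" "n \<le> x"
  shows "card {u \<in> A x n. good x u} = 2"
proof -
  have "{u \<in> A x n. good x u} = {replicate n True, replicate n False}"
  proof (rule set_eqI, rule iffI)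
    fix u assume u: "u \<in> {u \<in> A x n. good x u}"
    then have un: "u \<noteq> []" and lu: "length u = n" using assms unfolding A_def by auto
    have "\<forall>i<length u. u!i = hd u" using u good_iff[OF un] lu assms by auto
    then have "u = replicate n (hd u)" using lu by (intro nth_equalityI) auto
    then show "u \<in> {replicate n True, replicate n False}" by (cases "hd u") auto
  next
    fix u assume "u \<in> {replicate n True, replicate n False}"
    then obtain c where c: "u = replicate n c" by auto
    have un: "u \<noteq> []" using c assms by auto
    have "hd u = c" using c assms by (cases n) auto
    then have "good x u" using good_iff[OF un] c by auto
    then show "u \<in> {u \<in> A x n. good x u}" using c avoids_rep unfolding A_def by auto
  qed
  moreover have "replicate n True \<noteq> replicate n False" using assms by (cases n) auto
  ultimately show ?thesis by simp
qed

lemma cardG_big: assumes "x < n"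
  shows "card {u \<in> A x n. good x u} = card (A x (n - x))"
proof -
  have "{u \<in> A x n. good x u} = (\<lambda>v. replicate x (hd v) @ v) ` A x (n - x)"
  proof (rule set_eqI, rule iffI)
    fix u assume u: "u \<in> {u \<in> A x n. good x u}"
    then have un: "u \<noteq> []" and lu: "length u = n" and au: "avoids x u" using assms unfolding A_def by auto
    have h: "\<forall>i<length u. i \<le> x \<longrightarrow> u!i = hd u" using u good_iff[OF un] by auto
    define v where "v = drop x u"
    have lv: "length v = n - x" using lu v_def by auto
    have vn: "v \<noteq> []" using lv assms by auto
    have hv: "hd v = hd u" using h lu assms unfolding v_def by (simp add: hd_drop_conv_nth)
    have tk: "take x u = replicate x (hd u)"
      using h lu assms by (intro nth_equalityI) auto
    have ue: "u = replicate x (hd v) @ v" using tk hv v_def append_take_drop_id[of x u] by simp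
    obtain t where t: "v = hd v # t" using vn by (cases v) auto
    have "avoids x (replicate x (hd v) @ hd v # t)" using au ue t by simp
    then have "avoids x (hd v # t)" using L1rep[of x x "hd v" t] by simp
    then have "avoids x v" using t by simp
    then show "u \<in> (\<lambda>v. replicate x (hd v) @ v) ` A x (n - x)" using ue lv unfolding A_def by auto
  next
    fix u assume "u \<in> (\<lambda>v. replicate x (hd v) @ v) ` A x (n - x)"
    then obtain v where v: "v \<in> A x (n - x)" "u = replicate x (hd v) @ v" by auto
    have vn: "v \<noteq> []" using v assms unfolding A_def by auto
    obtain t where t: "v = hd v # t" using vn by (cases v) auto
    have "avoids x (hd v # t)" using v(1) t unfolding A_def by simp
    then have "avoids x (replicate x (hd v) @ hd v # t)" using L1rep[of x x "hd v" t] by simp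
    then have av: "avoids x u" using v(2) t by simp
    have lu: "length u = n" using v assms unfolding A_def by auto
    have un: "u \<noteq> []" using lu assms by auto
    have hu: "hd u = hd v" using v vn by (cases x) auto
    have "\<forall>i<length u. i \<le> x \<longrightarrow> u!i = hd u"
    proof (intro allI impI)
      fix i assume "i < length u" "i \<le> x"
      then show "u!i = hd u" using hu v(2) vn
        by (cases "i < x") (auto simp: nth_append hd_conv_nth)
    qed
    then have "good x u" using good_iff[OF un] by auto
    then show "u \<in> {u \<in> A x n. good x u}" using av lu unfolding A_def by auto
  qed
  moreover have "inj_on (\<lambda>v. replicate x (hd v) @ v) (A x (n - x))"
  proof (rule inj_onI)
    fix a b assume "replicate x (hd a) @ a = replicate x (hd b) @ b"
    then have "drop x (replicate x (hd a) @ a) = drop x (replicate x (hd b) @ b)" by simp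
    then show "a = b" by simp
  qed
  ultimately show ?thesis by (simp add: card_image)
qed

theorem theorem1:
  fixes x :: nat and m :: int
  assumes "x \<ge> 1" and "m \<ge> 2"
  shows "N m x = N (m - 1) x + N (m - int x - 1) x"
proof -
  define n where "n = nat (m - 1)"
  have n: "m = int n + 1" "n \<ge> 1" using assms(2) unfolding n_def by auto
  have nm: "nat m = Suc n" using n by simp
  have Nm: "N m x = card (A x (Suc n))" using n nm unfolding N_def A_def
    by auto
  have Nm1: "N (m - 1) x = card (A x n)" using n cardA1 unfolding N_def A_def
    by (cases "n = 1") auto
  have Nm2: "N (m - int x - 1) x = card {u \<in> A x n. good x u}"
  proof (cases "n \<le> x")
    case True
    then show ?thesis using cardG_small[OF n(2) True] n unfolding N_def by auto
  next
    case False
    then have "card {u \<in> A x n. good x u} = card (A x (n - x))" using cardG_big by auto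
    then show ?thesis using False n cardA1 unfolding N_def A_def
      by (cases "n - x = 1") (auto simp: nat_diff_distrib)
  qed
  show ?thesis using Nm Nm1 Nm2 cardA_Suc[OF n(2)] by simp
qed

end
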